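(* Let $p\ge19$ be prime and $n\ge10^6$, and let $r(p,n)$ be the maximum size of a subset of $\mathbb{F}_p^n$ containing no nontrivial three-term arithmetic progression (no $x,x+d,x+2d$ all in the set with $d\ne0$). Then $r(p,n)\ge p^{0.782n}$ and $r(p,n)\ge\big((p+1)/2.0001\big)^{n-2}$. *)

theory Defs
  imports Complex_Main "HOL-Computational_Algebra.Primes"
begin

text \<open>The vector space F_p^n, represented as functions nat => nat with coordinates
  i < n taking values in {0..<p} (residues mod p) and all other coordinates 0.\<close>
definition Fpn :: "nat \<Rightarrow> nat \<Rightarrow> (nat \<Rightarrow> nat) set" where
  "Fpn p n = {x. \<forall>i. (i < n \<longrightarrow> x i < p) \<and> (n \<le> i \<longrightarrow> x i = 0)}"

definition vadd :: "nat \<Rightarrow> (nat \<Rightarrow> nat) \<Rightarrow> (nat \<Rightarrow> nat) \<Rightarrow> (nat \<Rightarrow> nat)" where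
  "vadd p x y = (\<lambda>i. (x i + y i) mod p)"

definition ap3_free :: "nat \<Rightarrow> nat \<Rightarrow> (nat \<Rightarrow> nat) set \<Rightarrow> bool" where
  "ap3_free p n A \<longleftrightarrow>
     (\<forall>x\<in>Fpn p n. \<forall>d\<in>Fpn p n. d \<noteq> (\<lambda>_. 0) \<longrightarrow>
        \<not> (x \<in> A \<and> vadd p x d \<in> A \<and> vadd p x (vadd p d d) \<in> A))"

definition r3 :: "nat \<Rightarrow> nat \<Rightarrow> nat" where
  "r3 p n = Max (card ` {A. A \<subseteq> Fpn p n \<and> ap3_free p n A})"

end

theory Submission
  imports Defs "HOL-Library.FuncSet" "HOL-Analysis.Convex"
begin


lemma Fpn_finite: "finite (Fpn p n)"
proof -
  have "Fpn p n = {f. \<forall>x. (x \<in> {..<n} \<longrightarrow> f x \<in> {..<p}) \<and> (x \<notin> {..<n} \<longrightarrow> f x = 0)}"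
    unfolding Fpn_def by auto
  thus ?thesis using finite_set_of_finite_funs[of "{..<n}" "{..<p}" 0] by simp
qed

lemma r3_ge: assumes "A \<subseteq> Fpn p n" "ap3_free p n A" shows "card A \<le> r3 p n"
proof -
  have fin: "finite {A. A \<subseteq> Fpn p n \<and> ap3_free p n A}"
    by (rule finite_subset[of _ "Pow (Fpn p n)"]) (use Fpn_finite in auto)
  show ?thesis unfolding r3_def
    by (rule Max_ge) (use fin assms in auto)
qed

definition Bx :: "nat \<Rightarrow> nat \<Rightarrow> nat \<Rightarrow> (nat \<Rightarrow> nat) set" where
  "Bx p n h = {x \<in> Fpn p n. \<forall>i. x i \<le> h}"

lemma card_Bx: assumes "h < p" shows "card (Bx p n h) = (h+1)^n"
proof -
  have "bij_betw (\<lambda>x. restrict x {..<n}) (Bx p n h) (PiE {..<n} (\<lambda>_. {..h}))"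
  proof (rule bij_betw_imageI)
    show "inj_on (\<lambda>x. restrict x {..<n}) (Bx p n h)"
    proof (rule inj_onI)
      fix x y assume x: "x \<in> Bx p n h" and y: "y \<in> Bx p n h"
        and e: "restrict x {..<n} = restrict y {..<n}"
      show "x = y"
      proof
        fix i show "x i = y i"
        proof (cases "i < n")
          case True
          have "restrict x {..<n} i = restrict y {..<n} i" using e by simp
          then show ?thesis using True by simp
        next
          case False then show ?thesis using x y unfolding Bx_def Fpn_def by auto
        qed
      qed
    qed
    show "(\<lambda>x. restrict x {..<n}) ` Bx p n h = PiE {..<n} (\<lambda>_. {..h})"
    proof
      show "(\<lambda>x. restrict x {..<n}) ` Bx p n h \<subseteq> PiE {..<n} (\<lambda>_. {..h})"
        by (intro image_subsetI restrict_PiE) (auto simp: Bx_def Pi_def)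
      show "PiE {..<n} (\<lambda>_. {..h}) \<subseteq> (\<lambda>x. restrict x {..<n}) ` Bx p n h"
      proof
        fix g assume g: "g \<in> PiE {..<n} (\<lambda>_. {..h})"
        let ?f = "\<lambda>i. if i < n then g i else 0"
        have "?f \<in> Bx p n h" using g assms unfolding Bx_def Fpn_def
          by (auto simp: PiE_def Pi_def)
        moreover have "restrict ?f {..<n} = g" using g
          by (auto simp: PiE_def extensional_def restrict_def)
        ultimately show "g \<in> (\<lambda>x. restrict x {..<n}) ` Bx p n h" by (metis (no_types, lifting) image_eqI)
      qed
    qed
  qed
  hence "card (Bx p n h) = card (PiE {..<n} (\<lambda>_. {..h::nat}))" by (rule bij_betw_same_card)
  also have "\<dots> = (h+1)^n" by (simp add: card_PiE)
  finally show ?thesis .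
qed

definition Qs :: "nat \<Rightarrow> (nat \<Rightarrow> nat) \<Rightarrow> nat" where
  "Qs n x = (\<Sum>i<n. (x i)^2)"

definition Sk :: "nat \<Rightarrow> nat \<Rightarrow> nat \<Rightarrow> nat \<Rightarrow> (nat \<Rightarrow> nat) set" where
  "Sk p n h k = {x \<in> Bx p n h. Qs n x = k}"

lemma Sk_sub: "Sk p n h k \<subseteq> Fpn p n" unfolding Sk_def Bx_def by auto

lemma Sk_free: assumes p: "p = 2*h+1" shows "ap3_free p n (Sk p n h k)"
  unfolding ap3_free_def
proof (intro ballI impI notI)
  fix x d assume xF: "x \<in> Fpn p n" and dF: "d \<in> Fpn p n" and d0: "d \<noteq> (\<lambda>_. 0)"
    and H: "x \<in> Sk p n h k \<and> vadd p x d \<in> Sk p n h k \<and> vadd p x (vadd p d d) \<in> Sk p n h k"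
  define y where "y = vadd p x d"
  define z where "z = vadd p x (vadd p d d)"
  have xs: "x \<in> Sk p n h k" and ys: "y \<in> Sk p n h k" and zs: "z \<in> Sk p n h k"
    using H by (auto simp: y_def z_def)
  have bx: "\<And>i. x i \<le> h" and yb: "\<And>i. y i \<le> h" and bz: "\<And>i. z i \<le> h"
    using xs ys zs unfolding Sk_def Bx_def by auto
  have Qx: "Qs n x = k" and Qy: "Qs n y = k" and Qz: "Qs n z = k"
    using xs ys zs unfolding Sk_def by auto
  have dlt: "d i < p" for i
  proof (cases "i < n")
    case True then show ?thesis using dF unfolding Fpn_def by blast
  next
    case False then have "d i = 0" using dF unfolding Fpn_def by auto
    then show ?thesis using p by simp
  qed
  have sum: "x i + z i = 2 * y i" for i
  proof -
    have "(x i + z i) mod p = (2 * y i) mod p"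
      unfolding y_def z_def vadd_def by (simp add: mod_simps) (simp add: algebra_simps mult_2_right)
    moreover have "x i + z i < p" "2 * y i < p" using bx[of i] bz[of i] yb[of i] p by auto
    ultimately show ?thesis by simp
  qed
  have sq: "(int (x i) - int (z i))^2 = 2 * int ((x i)^2) + 2 * int ((z i)^2) - 4 * int ((y i)^2)" for i
  proof -
    have e: "int (x i) + int (z i) = 2 * int (y i)" using sum[of i] by linarith
    have h: "4 * (int (y i))^2 = (int (x i) + int (z i))^2" unfolding e by (simp add: power_mult_distrib)
    show ?thesis using h unfolding power2_diff power2_sum of_nat_power by linarith
  qed
  have "(\<Sum>i<n. (int (x i) - int (z i))^2) = (\<Sum>i<n. 2 * int ((x i)^2) + 2 * int ((z i)^2) - 4 * int ((y i)^2))"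
    using sq by simp
  also have "\<dots> = 2 * int (Qs n x) + 2 * int (Qs n z) - 4 * int (Qs n y)"
    unfolding Qs_def by (simp add: sum.distrib sum_subtractf sum_distrib_left)
  also have "\<dots> = 0" using Qx Qy Qz by simp
  finally have "(\<Sum>i<n. (int (x i) - int (z i))^2) = 0" .
  hence "\<forall>i\<in>{..<n}. (int (x i) - int (z i))^2 = 0"
    by (subst (asm) sum_nonneg_eq_0_iff) auto
  hence xz: "\<And>i. i < n \<Longrightarrow> x i = z i" by auto
  have "d i = 0" for i
  proof (cases "i < n")
    case False then show ?thesis using dF unfolding Fpn_def by auto
  next
    case True
    have "y i = x i" using sum[of i] xz[OF True] by simp
    hence e: "(x i + d i) mod p = x i" unfolding y_def vadd_def by simp
    have "x i < p" using bx[of i] p by simp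
    show ?thesis
    proof (rule ccontr)
      assume "d i \<noteq> 0"
      show False
      proof (cases "x i + d i < p")
        case True then show False using e \<open>d i \<noteq> 0\<close> by simp
      next
        case False
        hence "(x i + d i) mod p = x i + d i - p"
          using \<open>x i < p\<close> dlt[of i] by (simp add: le_mod_geq)
        then show False using e dlt[of i] False by linarith
      qed
    qed
  qed
  with d0 show False by auto
qed

lemma pigeon:
  assumes "finite I" "I \<noteq> {}" "finite B" "B = (\<Union>k\<in>I. S k)"
  shows "\<exists>k\<in>I. card B \<le> card I * card (S k)"
proof (rule ccontr)
  assume "\<not> ?thesis"
  hence lt: "\<And>k. k \<in> I \<Longrightarrow> card I * card (S k) < card B" by auto
  have "card B \<le> (\<Sum>k\<in>I. card (S k))" using assms card_UN_le by metis
  hence "card I * card B \<le> card I * (\<Sum>k\<in>I. card (S k))" by simp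
  also have "\<dots> = (\<Sum>k\<in>I. card I * card (S k))" by (simp add: sum_distrib_left)
  also have "\<dots> < (\<Sum>k\<in>I. card B)" using assms lt by (intro sum_strict_mono) auto
  also have "\<dots> = card I * card B" by simp
  finally show False by simp
qed

lemma comb:
  assumes p: "p = 2*h+1"
  shows "real ((h+1)^n) \<le> real (n*h^2 + 1) * real (r3 p n)"
proof -
  let ?I = "{..n*h^2}"
  have eq: "Bx p n h = (\<Union>k\<in>?I. Sk p n h k)"
  proof
    show "Bx p n h \<subseteq> (\<Union>k\<in>?I. Sk p n h k)"
    proof
      fix x assume x: "x \<in> Bx p n h"
      have "\<And>i. i \<in> {..<n} \<Longrightarrow> (x i)^2 \<le> h^2" using x by (auto simp: Bx_def intro: power_mono)
      hence "Qs n x \<le> of_nat (card {..<n}) * h^2" unfolding Qs_def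
        by (rule sum_bounded_above)
      thus "x \<in> (\<Union>k\<in>?I. Sk p n h k)" using x unfolding Sk_def by auto
    qed
  qed (auto simp: Sk_def)
  have finB: "finite (Bx p n h)" unfolding Bx_def using Fpn_finite by auto
  obtain k where "k \<in> ?I" "card (Bx p n h) \<le> card ?I * card (Sk p n h k)"
    using pigeon[OF _ _ finB eq] by auto
  hence "(h+1)^n \<le> (n*h^2+1) * card (Sk p n h k)" using card_Bx[of h p n] p by simp
  also have "\<dots> \<le> (n*h^2+1) * r3 p n"
    using r3_ge[OF Sk_sub Sk_free[OF p]] by (intro mult_le_mono2)
  finally have "(h+1)^n \<le> (n*h^2+1) * r3 p n" .
  thus ?thesis by (metis of_nat_le_iff of_nat_mult)
qed



lemma n1: "(19::real)^226 \<le> 10^289" by simp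
lemma n2: "(19::real) powr (226/289) \<le> 10"
proof -
  have "(19 powr (226/289::real))^289 = (19::real)^226"
    by (simp add: powr_powr flip: powr_realpow)
  hence "(19 powr (226/289::real))^Suc 288 \<le> 10^Suc 288" using n1 by simp
  thus ?thesis by (rule power_le_imp_le_base) auto
qed

lemma conc: assumes "p \<ge> (19::real)" shows "p powr (226/289) \<le> (p+1)/2"
proof -
  define s where "s = p/19"
  have s1: "s \<ge> 1" using assms by (simp add: s_def)
  have "p = 19 * s" by (simp add: s_def)
  hence "p powr (226/289) = 19 powr (226/289) * s powr (226/289)"
    using s1 by (simp add: powr_mult)
  also have "\<dots> \<le> 10 * (226/289 * s + 63/289)"
  proof (rule mult_mono)
    show "s powr (226/289) \<le> 226/289 * s + 63/289"
      using Youngs_inequality_0[of "226/289" "63/289" s 1] s1 by simp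
  qed (use n2 in auto)
  also have "\<dots> \<le> (p+1)/2" using s1 \<open>p = 19*s\<close> by simp
  finally show ?thesis .
qed

lemma pow19: assumes "s \<ge> (0::real)" shows "19 powr s \<ge> 1 + s"
proof -
  have "ln 19 \<ge> (1::real)"
    using exp_le by (subst ln_ge_iff) auto
  have "19 powr s = exp (s * ln 19)" by (simp add: powr_def)
  also have "\<dots> \<ge> 1 + s * ln 19" by (rule exp_ge_add_one_self)
  finally have "1 + s * ln 19 \<le> 19 powr s" .
  moreover have "s \<le> s * ln 19" using mult_left_mono[OF \<open>1 \<le> ln 19\<close> assms] by simp
  ultimately show ?thesis by linarith
qed

lemma two_pow: "q \<ge> 49 \<Longrightarrow> 2^q \<ge> 20000*q + (20002::nat)"
proof (induction q rule: dec_induct)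
  case base then show ?case by simp
next
  case (step q) then show ?case by simp
qed

lemma bigpow: assumes p: "p \<ge> (19::real)" and t: "t \<ge> 1000000/144500"
  shows "p powr t \<ge> 36125 * t * p^2 + 1"
proof -
  have p0: "p > 0" using p by simp
  have "p powr t = p powr 2 * p powr (t - 2)" using powr_add[of p 2 "t-2"] by simp
  also have "p powr 2 = p^2" using p0 by (simp add: powr_realpow)
  finally have e1: "p powr t = p^2 * p powr (t-2)" .
  have "19 powr (t-2) \<le> p powr (t-2)" using p t by (intro powr_mono2) auto
  moreover have "19 powr (t-2) = 19 powr (4::real) * 19 powr (t-6)" using powr_add[of "19::real" 4 "t-6"] by simp
  moreover have "(19::real) powr (4::real) = 130321" by (simp add: powr_realpow[of 19 4, simplified])
  moreover have "19 powr (t-6) \<ge> 1 + (t-6)" using t by (intro pow19) simp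
  ultimately have "p powr (t-2) \<ge> 130321 * (t - 5)" by simp
  hence "p powr t \<ge> p^2 * (130321 * (t-5))" unfolding e1 by (intro mult_left_mono) auto
  moreover have "p^2 * (130321 * (t-5)) = 36125*t*p^2 + p^2 * (94196*t - 651605)"
    by (simp add: algebra_simps)
  moreover have "p^2 * (94196*t - 651605) \<ge> 1 * 1"
    using p t by (intro mult_mono) (auto simp: one_le_power)
  ultimately show ?thesis by linarith
qed

lemma growth: assumes "k \<ge> (999998::nat)" shows "(20001/20000::real)^k \<ge> k + 2"
proof -
  define q where "q = k div 20000"
  have q49: "q \<ge> 49" using assms unfolding q_def by simp
  have kq: "k \<le> 20000*q + 19999" unfolding q_def by simp
  have "(2::real) \<le> (1 + 1/20000)^20000"
    using Bernoulli_inequality[of "1/20000::real" 20000] by simp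
  hence "(2::real)^q \<le> ((1 + 1/20000)^20000)^q" by (intro power_mono) auto
  also have "\<dots> = (20001/20000)^(20000*q)" by (simp add: power_mult)
  also have "\<dots> \<le> (20001/20000)^k" using kq unfolding q_def
    by (intro power_increasing) auto
  finally have "(2::real)^q \<le> (20001/20000)^k" .
  moreover have "real (20000*q+20002) \<le> 2^q" using two_pow[OF q49]
    by (metis of_nat_le_iff of_nat_numeral of_nat_power)
  ultimately show ?thesis using kq by simp
qed


theorem corollary14:
  fixes p n :: nat
  assumes "prime p" and "p \<ge> 19" and "n \<ge> 10^6"
  shows "real (r3 p n) \<ge> real p powr (0.782 * real n) \<and>
         real (r3 p n) \<ge> ((real p + 1) / 2.0001) ^ (n - 2)"
proof -
  have "odd p" using assms by (intro prime_odd_nat) auto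
  define h where "h = p div 2"
  have p: "p = 2*h+1" using \<open>odd p\<close> unfolding h_def by presburger
  define R where "R = real (r3 p n)"
  define m where "m = (real p + 1)/2"
  define N1 where "N1 = real (n*h^2+1)"
  have hm: "real (h+1) = m" unfolding m_def using p by simp
  have "0 < n*h^2+1" by simp
  hence N1pos: "N1 > 0" unfolding N1_def by (simp only: of_nat_0_less_iff)
  have "m^n \<le> N1 * R" using comb[OF p, of n] hm unfolding N1_def R_def by (simp del: of_nat_add)
  hence LB: "m^n / N1 \<le> R" using N1pos by (simp add: pos_divide_le_eq mult.commute)
  have p19: "real p \<ge> 19" using assms by simp
  have m0: "m \<ge> 0" unfolding m_def by simp
  have n0: "real n \<ge> 1000000" using assms by simp
  have B1: "real p powr (0.782 * real n) \<le> m^n / N1"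
  proof -
    define t where "t = real n / 144500"
    have t: "t \<ge> 1000000/144500" unfolding t_def using n0 by simp
    have e: "0.782 * real n = 226/289 * real n - t" by (simp add: t_def)
    have pp: "real p > 0" using p19 by simp
    have "real p powr (0.782 * real n) = real p powr (226/289 * real n) / real p powr t"
      unfolding e using pp by (simp add: powr_diff)
    also have "real p powr (226/289 * real n) = (real p powr (226/289)) ^ n"
      using pp by (simp add: powr_powr flip: powr_realpow)
    finally have eq: "real p powr (0.782 * real n) = (real p powr (226/289)) ^ n / real p powr t" .
    have num: "(real p powr (226/289)) ^ n \<le> m^n"
      unfolding m_def using conc[OF p19] by (intro power_mono) auto
    have "N1 \<le> 36125 * t * (real p)^2 + 1"
    proof -
      have "4 * real h^2 \<le> (real p)^2" using p by (simp add: power2_eq_square algebra_simps)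
      hence "real n * real h^2 \<le> real n * ((real p)^2 / 4)" by (intro mult_left_mono) auto
      also have "\<dots> = 36125 * t * (real p)^2" unfolding t_def by simp
      finally show ?thesis unfolding N1_def by simp
    qed
    also have "\<dots> \<le> real p powr t" using bigpow[OF p19 t] .
    finally have den: "N1 \<le> real p powr t" .
    show ?thesis unfolding eq using num den N1pos m0
      by (intro frac_le) auto
  qed
  have B2: "((real p + 1) / 2.0001) ^ (n - 2) \<le> m^n / N1"
  proof -
    define k where "k = n - 2"
    have nk: "n = k + 2" unfolding k_def using assms by simp
    define X where "X = (20001/20000::real)^k"
    have X: "X \<ge> real n" unfolding X_def nk using growth[of k] nk assms by simp
    have X1: "X \<ge> 1" using X n0 by simp
    have eqm: "(real p + 1) / 2.0001 = m / (20001/20000)" unfolding m_def by simp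
    have "((real p + 1) / 2.0001) ^ (n - 2) = m^k / X"
      unfolding X_def k_def eqm by (rule power_divide)
    also have "\<dots> \<le> m^n / N1"
    proof -
      have "N1 \<le> m^2 * X"
      proof -
        have "m^2 = real h^2 + 2 * real h + 1" using hm[symmetric] by (simp add: power2_eq_square algebra_simps)
        hence "m^2 * X \<ge> real h^2 * X + X" by (simp add: algebra_simps) (use X1 in simp)
        moreover have "real h^2 * X \<ge> real h^2 * real n" using X by (intro mult_left_mono) auto
        ultimately show ?thesis unfolding N1_def using X1 by (simp add: algebra_simps)
      qed
      hence "m^k * N1 \<le> m^k * (m^2 * X)" using m0 by (intro mult_left_mono) auto
      also have "\<dots> = m^n * X" unfolding nk by (simp only: power_add mult.assoc)
      finally have "m^k * N1 \<le> m^n * X" .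
      have XN: "X * N1 > 0" using N1pos X1 by simp
      have "m^k / X = (m^k * N1) / (X * N1)" using N1pos by simp
      also have "\<dots> \<le> (m^n * X) / (X * N1)"
        using \<open>m^k * N1 \<le> m^n * X\<close> XN by (intro divide_right_mono) auto
      also have "\<dots> = m^n / N1" using X1 by simp
      finally show ?thesis .
    qed
    finally show ?thesis .
  qed
  show ?thesis using B1 B2 LB unfolding R_def by linarith
qed

end
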